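(* Let $G$ be a connected 2-walk-regular graph that is neither bipartite nor complete multipartite. Then the canonical vector coloring of $G$ is locally injective.
   Context: With $A$ the adjacency matrix and $\circ$ the entrywise product, $G$ is 1-walk-regular if for all $\ell\in\mathbb{N}$ there are constants $a_\ell,b_\ell$ with $A^\ell\circ I=a_\ell I$ and $A^\ell\circ A=b_\ell A$; it is 2-walk-regular if additionally there are constants $c_\ell$ with $A^\ell\circ A_2=c_\ell A_2$ for all $\ell$, where $A_2$ is the adjacency matrix of the graph joining vertices at distance exactly 2 in $G$. Canonical vector coloring: for $G$ on $n$ vertices whose least adjacency eigenvalue has multiplicity $d$, take an $n\times d$ matrix $Q$ whose columns form an orthonormal basis of the least eigenspace and assign to vertex $i$ the vector $\sqrt{n/d}$ times the $i$-th row of $Q$. A vector assignment is locally injective if no two distinct vertices with a common neighbor receive the same vector. *)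

theory Defs
  imports "HOL-Analysis.Analysis"
begin

definition simple_graph :: "('n::finite \<Rightarrow> 'n \<Rightarrow> bool) \<Rightarrow> bool" where
  "simple_graph E \<longleftrightarrow> (\<forall>i j. E i j \<longrightarrow> E j i) \<and> (\<forall>i. \<not> E i i)"

definition adj_matrix :: "('n::finite \<Rightarrow> 'n \<Rightarrow> bool) \<Rightarrow> real^'n^'n" where
  "adj_matrix E = (\<chi> i j. if E i j then 1 else 0)"

definition dist2_matrix :: "('n::finite \<Rightarrow> 'n \<Rightarrow> bool) \<Rightarrow> real^'n^'n" where
  "dist2_matrix E = (\<chi> i j. if i \<noteq> j \<and> \<not> E i j \<and> (\<exists>k. E i k \<and> E k j) then 1 else 0)"

fun matpow :: "real^'n^'n \<Rightarrow> nat \<Rightarrow> real^'n^'n" where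
  "matpow M 0 = mat 1"
| "matpow M (Suc l) = M ** matpow M l"

definition hadamard :: "real^'n^'n \<Rightarrow> real^'n^'n \<Rightarrow> real^'n^'n" where
  "hadamard M N = (\<chi> i j. M $ i $ j * N $ i $ j)"

definition one_walk_regular :: "('n::finite \<Rightarrow> 'n \<Rightarrow> bool) \<Rightarrow> bool" where
  "one_walk_regular E \<longleftrightarrow>
     (\<forall>l. \<exists>a b. hadamard (matpow (adj_matrix E) l) (mat 1) = a *\<^sub>R mat 1
              \<and> hadamard (matpow (adj_matrix E) l) (adj_matrix E) = b *\<^sub>R adj_matrix E)"

definition two_walk_regular :: "('n::finite \<Rightarrow> 'n \<Rightarrow> bool) \<Rightarrow> bool" where
  "two_walk_regular E \<longleftrightarrow> one_walk_regular E \<and>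
     (\<forall>l. \<exists>c. hadamard (matpow (adj_matrix E) l) (dist2_matrix E) = c *\<^sub>R dist2_matrix E)"

definition connected_graph :: "('n::finite \<Rightarrow> 'n \<Rightarrow> bool) \<Rightarrow> bool" where
  "connected_graph E \<longleftrightarrow> (\<forall>i j. E\<^sup>*\<^sup>* i j)"

definition bipartite :: "('n::finite \<Rightarrow> 'n \<Rightarrow> bool) \<Rightarrow> bool" where
  "bipartite E \<longleftrightarrow> (\<exists>f :: 'n \<Rightarrow> bool. \<forall>i j. E i j \<longrightarrow> f i \<noteq> f j)"

text \<open>Complete multipartite: the vertex set is partitioned into parts (labelled by p)
  and two vertices are adjacent iff they lie in different parts.\<close>
definition complete_multipartite :: "('n::finite \<Rightarrow> 'n \<Rightarrow> bool) \<Rightarrow> bool" where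
  "complete_multipartite E \<longleftrightarrow> (\<exists>p :: 'n \<Rightarrow> 'n. \<forall>i j. E i j \<longleftrightarrow> p i \<noteq> p j)"

definition eigenvalues_of :: "real^'n^'n \<Rightarrow> real set" where
  "eigenvalues_of M = {c. \<exists>v. v \<noteq> 0 \<and> M *v v = c *\<^sub>R v}"

definition least_eigenvalue :: "real^'n^'n \<Rightarrow> real" where
  "least_eigenvalue M = Min (eigenvalues_of M)"

definition eigenspace_of :: "real^'n^'n \<Rightarrow> real \<Rightarrow> (real^'n) set" where
  "eigenspace_of M c = {v. M *v v = c *\<^sub>R v}"

text \<open>qs is a list of columns forming an orthonormal basis of the least eigenspace
  of the adjacency matrix (its length d is then the multiplicity).\<close>
definition least_eig_onb :: "('n::finite \<Rightarrow> 'n \<Rightarrow> bool) \<Rightarrow> (real^'n) list \<Rightarrow> bool" where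
  "least_eig_onb E qs \<longleftrightarrow>
     (\<forall>a < length qs. \<forall>b < length qs. (qs ! a) \<bullet> (qs ! b) = (if a = b then 1 else 0))
     \<and> span (set qs) = eigenspace_of (adj_matrix E) (least_eigenvalue (adj_matrix E))"

text \<open>Canonical vector colouring: vertex i gets sqrt(n/d) times the i-th row of Q.\<close>
definition canonical_coloring :: "(real^'n::finite) list \<Rightarrow> 'n \<Rightarrow> real list" where
  "canonical_coloring qs i =
     map (\<lambda>q. sqrt (real CARD('n) / real (length qs)) * q $ i) qs"

definition locally_injective :: "('n \<Rightarrow> 'n \<Rightarrow> bool) \<Rightarrow> ('n \<Rightarrow> 'v) \<Rightarrow> bool" where
  "locally_injective E f \<longleftrightarrow>
     (\<forall>i j. i \<noteq> j \<and> (\<exists>k. E i k \<and> E j k) \<longrightarrow> f i \<noteq> f j)"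

end

theory Submission
  imports Defs
begin


definition symm :: "real^'n^'n \<Rightarrow> bool" where
  "symm A \<longleftrightarrow> (\<forall>x y. x \<bullet> (A *v y) = (A *v x) \<bullet> y)"

lemma quad_aux: "(G::real) + 1 \<noteq> 0 \<Longrightarrow> (2*(-W/(G+1))*W + (-W/(G+1))^2*G) * (G+1)^2 = -(W^2*(G+2))"
proof -
  assume s: "G + 1 \<noteq> 0"
  have a: "2*(-W/(G+1))*W * (G+1)^2 = -2*W^2*(G+1)" using s by (simp add: power2_eq_square)
  have b: "(-W/(G+1))^2*G * (G+1)^2 = W^2*G" using s by (simp add: power_divide)
  show ?thesis unfolding distrib_right a b by (simp add: algebra_simps)
qed

lemma quad_nonneg_zero:
  fixes W G :: real
  assumes "\<forall>t. 0 \<le> 2*t*W + t^2*G" "W \<ge> 0" "G \<ge> 0"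
  shows "W = 0"
proof (rule ccontr)
  assume "W \<noteq> 0" hence W: "W > 0" using assms by auto
  have "0 \<le> 2*(-W/(G+1))*W + (-W/(G+1))^2*G" using assms(1) by blast
  hence "0 \<le> (2*(-W/(G+1))*W + (-W/(G+1))^2*G) * (G+1)^2" by simp
  also have "\<dots> = -(W^2*(G+2))" using quad_aux[of G W] assms by simp
  also have "\<dots> < 0" using W assms by simp
  finally show False by simp
qed

lemma eigvec_in_subspace:
  fixes A :: "real^'n^'n" and Y :: "(real^'n) set"
  assumes sym: "symm A"
    and sub: "subspace Y" and inv: "\<forall>y\<in>Y. A *v y \<in> Y" and nz: "\<exists>y\<in>Y. y \<noteq> 0"
  shows "\<exists>y \<mu>. y \<in> Y \<and> y \<noteq> 0 \<and> A *v y = \<mu> *\<^sub>R y \<and> (\<forall>z\<in>Y. \<mu> * (z \<bullet> z) \<le> z \<bullet> (A *v z))"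
proof -
  define K where "K = Y \<inter> sphere 0 1"
  have cK: "compact K" unfolding K_def
    using closed_subspace[OF sub] compact_sphere by blast
  obtain y0 where y0: "y0 \<in> Y" "y0 \<noteq> 0" using nz by blast
  have "(1/norm y0) *\<^sub>R y0 \<in> K" unfolding K_def using y0 sub
    by (simp add: subspace_scale)
  hence neK: "K \<noteq> {}" by blast
  have cont: "continuous_on K (\<lambda>z. z \<bullet> (A *v z))"
    by (intro continuous_on_inner continuous_on_id linear_continuous_on)
       (simp add: linear_conv_bounded_linear)
  obtain x0 where x0: "x0 \<in> K" "\<forall>z\<in>K. x0 \<bullet> (A *v x0) \<le> z \<bullet> (A *v z)"
    using continuous_attains_inf[OF cK neK cont] by blast
  define m where "m = x0 \<bullet> (A *v x0)"
  have x0Y: "x0 \<in> Y" and nx0: "norm x0 = 1" using x0 unfolding K_def by auto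
  have x0x0: "x0 \<bullet> x0 = 1" using nx0 by (simp add: dot_square_norm)
  have ray: "m * (z \<bullet> z) \<le> z \<bullet> (A *v z)" if "z \<in> Y" for z
  proof (cases "z = 0")
    case True thus ?thesis by simp
  next
    case False
    define u where "u = (1/norm z) *\<^sub>R z"
    have "u \<in> K" unfolding K_def u_def using that False sub by (simp add: subspace_scale)
    hence "m \<le> u \<bullet> (A *v u)" using x0 m_def by auto
    also have "u \<bullet> (A *v u) = (z \<bullet> (A *v z)) / (norm z)^2"
      unfolding u_def by (simp add: matrix_vector_mult_scaleR power2_eq_square)
    finally have "m * (norm z)^2 \<le> z \<bullet> (A *v z)" using False
      by (simp add: pos_le_divide_eq)
    thus ?thesis by (simp add: dot_square_norm)
  qed
  define w where "w = A *v x0 - m *\<^sub>R x0"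
  have wY: "w \<in> Y" unfolding w_def using inv x0Y sub
    by (simp add: subspace_diff subspace_scale)
  define G where "G = w \<bullet> (A *v w) - m * (w \<bullet> w)"
  have G: "G \<ge> 0" using ray[OF wY] G_def by simp
  have W: "w \<bullet> w \<ge> 0" by simp
  have "\<forall>t. 0 \<le> 2*t*(w \<bullet> w) + t^2*G"
  proof
    fix t :: real
    have zY: "x0 + t *\<^sub>R w \<in> Y" using x0Y wY sub by (simp add: subspace_add subspace_scale)
    have s: "x0 \<bullet> (A *v w) = (A *v x0) \<bullet> w" using sym unfolding symm_def by blast
    have "0 \<le> (x0 + t *\<^sub>R w) \<bullet> (A *v (x0 + t *\<^sub>R w)) - m * ((x0 + t *\<^sub>R w) \<bullet> (x0 + t *\<^sub>R w))"
      using ray[OF zY] by simp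
    also have "\<dots> = 2*t*(w \<bullet> w) + t^2*G"
      unfolding G_def using s x0x0
      by (simp add: algebra_simps inner_add_left inner_add_right w_def m_def power2_eq_square inner_commute)
    finally show "0 \<le> 2*t*(w \<bullet> w) + t^2*G" .
  qed
  hence "w \<bullet> w = 0" using quad_nonneg_zero W G by blast
  hence "w = 0" by simp
  hence "A *v x0 = m *\<^sub>R x0" unfolding w_def by simp
  moreover have "x0 \<noteq> 0" using nx0 by auto
  ultimately show ?thesis using x0Y ray by blast
qed




lemma adj_symm:
  assumes "simple_graph E"
  shows "symm (adj_matrix E)"
proof -
  have sE: "E i j = E j i" for i j using assms unfolding simple_graph_def by blast
  have "x v* adj_matrix E = adj_matrix E *v x" for x :: "real^'a"
    by (simp add: vector_matrix_mult_def matrix_vector_mult_def adj_matrix_def vec_eq_iff sE mult.commute)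
  thus ?thesis unfolding symm_def by (metis dot_lmul_matrix inner_commute)
qed

lemma eig_orth:
  assumes "symm A" "A *v v = \<mu> *\<^sub>R v" "A *v w = \<nu> *\<^sub>R w" "\<mu> \<noteq> \<nu>"
  shows "v \<bullet> w = 0"
proof -
  have "\<nu> * (v \<bullet> w) = v \<bullet> (A *v w)" using assms by simp
  also have "\<dots> = (A *v v) \<bullet> w" using assms(1) unfolding symm_def by blast
  also have "\<dots> = \<mu> * (v \<bullet> w)" using assms by simp
  finally show ?thesis using assms(4) by simp
qed

lemma eig_finite:
  assumes "symm A"
  shows "finite (eigenvalues_of A)"
proof -
  define S where "S = eigenvalues_of A"
  define f where "f \<mu> = (SOME v. v \<noteq> 0 \<and> A *v v = \<mu> *\<^sub>R v)" for \<mu>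
  have f: "f \<mu> \<noteq> 0 \<and> A *v f \<mu> = \<mu> *\<^sub>R f \<mu>" if "\<mu> \<in> S" for \<mu>
    using that unfolding S_def eigenvalues_of_def f_def by (rule CollectE) (rule someI_ex, blast)
  have inj: "inj_on f S"
  proof (rule inj_onI)
    fix x y assume xy: "x \<in> S" "y \<in> S" "f x = f y"
    then have "x *\<^sub>R f x = y *\<^sub>R f x" using f by metis
    thus "x = y" using f[OF xy(1)] by simp
  qed
  have "pairwise orthogonal (f ` S)"
    unfolding pairwise_def orthogonal_def
    using f eig_orth[OF assms] by (metis imageE)
  hence "finite (f ` S)" by (rule pairwise_orthogonal_imp_finite)
  thus ?thesis using finite_imageD[OF _ inj] S_def by blast
qed

lemma one_neq_zero_vec: "\<exists>y\<in>(UNIV::(real^'n) set). y \<noteq> 0"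
proof -
  have "(\<chi> i. (1::real)) \<noteq> (0::real^'n)" by (simp add: vec_eq_iff)
  thus ?thesis by blast
qed

lemma least_eig:
  fixes A :: "real^'n^'n"
  assumes "symm A"
  shows "least_eigenvalue A \<in> eigenvalues_of A"
    "\<forall>\<mu>\<in>eigenvalues_of A. least_eigenvalue A \<le> \<mu>"
    "\<forall>z. least_eigenvalue A * (z \<bullet> z) \<le> z \<bullet> (A *v z)"
proof -
  obtain y \<mu> where y: "y \<noteq> 0" "A *v y = \<mu> *\<^sub>R y" "\<forall>z. \<mu> * (z \<bullet> z) \<le> z \<bullet> (A *v z)"
    using eigvec_in_subspace[OF assms subspace_UNIV, of] 
    using one_neq_zero_vec by blast
  have mu: "\<mu> \<in> eigenvalues_of A" using y unfolding eigenvalues_of_def by blast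
  have fin: "finite (eigenvalues_of A)" by (rule eig_finite[OF assms])
  show "least_eigenvalue A \<in> eigenvalues_of A"
    unfolding least_eigenvalue_def using Min_in[OF fin] mu by blast
  show "\<forall>\<mu>\<in>eigenvalues_of A. least_eigenvalue A \<le> \<mu>"
    unfolding least_eigenvalue_def using Min_le[OF fin] by blast
  have "least_eigenvalue A \<le> \<mu>" unfolding least_eigenvalue_def using Min_le[OF fin] mu by blast
  show "\<forall>z. least_eigenvalue A * (z \<bullet> z) \<le> z \<bullet> (A *v z)"
  proof
    fix z :: "real^'n"
    have "least_eigenvalue A * (z \<bullet> z) \<le> \<mu> * (z \<bullet> z)"
      using \<open>least_eigenvalue A \<le> \<mu>\<close> by (simp add: mult_right_mono)
    thus "least_eigenvalue A * (z \<bullet> z) \<le> z \<bullet> (A *v z)" using y(3) by (meson order_trans)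
  qed
qed

definition alg :: "real^'n^'n \<Rightarrow> (real^'n^'n) set" where
  "alg A = span (range (matpow A))"

lemma matrix_add_rdistrib': "((B + C) ** A) = (B ** A) + (C ** A)"
  by (vector matrix_matrix_mult_def sum.distrib[symmetric] field_simps)

lemma matpow_comm: "A ** matpow A l = matpow A l ** A"
  by (induction l) (simp_all add: matrix_mul_assoc)

lemma alg_gen: "matpow A l \<in> alg A"
  unfolding alg_def by (simp add: span_base)

lemma alg_mulA: assumes "M \<in> alg A" shows "M ** A \<in> alg A"
  using assms unfolding alg_def
proof (induction rule: span_induct_alt)
  case base thus ?case by (simp add: span_zero)
next
  case (step c x y)
  then obtain l where l: "x = matpow A l" by blast
  have "(c *\<^sub>R x + y) ** A = c *\<^sub>R (matpow A (Suc l)) + y ** A"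
    by (simp add: l matrix_add_rdistrib' scalar_matrix_assoc matpow_comm)
  moreover have "matpow A (Suc l) \<in> span (range (matpow A))" by (rule span_base) (rule rangeI)
  ultimately show ?case using step by (metis span_add span_scale)
qed

lemma alg_comm_mat: assumes "M \<in> alg A" shows "M ** A = A ** M"
  using assms unfolding alg_def
proof (induction rule: span_induct_alt)
  case base thus ?case by simp
next
  case (step c x' y)
  then obtain l where l: "x' = matpow A l" by blast
  show ?case using step
    by (simp add: l matrix_add_rdistrib' matrix_add_ldistrib scalar_matrix_assoc[symmetric]
          matrix_scalar_ac matpow_comm)
qed

lemma alg_comm: assumes "M \<in> alg A" shows "M *v (A *v x) = A *v (M *v x)"
  by (simp add: matrix_vector_mul_assoc alg_comm_mat[OF assms])

lemma matpow_symm: "symm A \<Longrightarrow> symm (matpow A l)"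
proof (induction l)
  case 0 thus ?case by (simp add: symm_def)
next
  case (Suc l)
  have c: "A ** matpow A l = matpow A l ** A" by (rule matpow_comm)
  show ?case unfolding symm_def
  proof (intro allI)
    fix x y :: "real^'a"
    have "x \<bullet> (matpow A (Suc l) *v y) = x \<bullet> (matpow A l *v (A *v y))"
      by (simp add: c matrix_vector_mul_assoc)
    also have "\<dots> = (matpow A l *v x) \<bullet> (A *v y)" using Suc unfolding symm_def by blast
    also have "\<dots> = (A *v (matpow A l *v x)) \<bullet> y" using Suc unfolding symm_def by blast
    also have "\<dots> = (matpow A (Suc l) *v x) \<bullet> y" by (simp add: matrix_vector_mul_assoc)
    finally show "x \<bullet> (matpow A (Suc l) *v y) = (matpow A (Suc l) *v x) \<bullet> y" .
  qed
qed

lemma alg_symm: assumes "symm A" "M \<in> alg A" shows "symm M"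
  using assms(2) unfolding alg_def
proof (induction rule: span_induct_alt)
  case base thus ?case by (simp add: symm_def)
next
  case (step c x' y)
  then obtain l where l: "x' = matpow A l" by blast
  have s: "symm (matpow A l)" by (rule matpow_symm[OF assms(1)])
  show ?case using step s unfolding symm_def
    by (simp add: l matrix_vector_mult_add_rdistrib
          scaleR_matrix_vector_assoc[symmetric] inner_add_left inner_add_right)
qed

lemma alg_hadamard:
  assumes "\<forall>l. \<exists>c. hadamard (matpow A l) B = c *\<^sub>R B" "M \<in> alg A"
  shows "\<exists>c. hadamard M B = c *\<^sub>R B"
  using assms(2) unfolding alg_def
proof (induction rule: span_induct_alt)
  case base thus ?case by (rule exI[of _ 0]) (simp add: hadamard_def vec_eq_iff)
next
  case (step c x' y)
  then obtain l where l: "x' = matpow A l" by blast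
  obtain c1 where c1: "hadamard (matpow A l) B = c1 *\<^sub>R B" using assms(1) by blast
  obtain c2 where c2: "hadamard y B = c2 *\<^sub>R B" using step by blast
  have "hadamard (c *\<^sub>R x' + y) B = c *\<^sub>R hadamard x' B + hadamard y B"
    by (simp add: hadamard_def vec_eq_iff algebra_simps)
  also have "\<dots> = (c*c1 + c2) *\<^sub>R B" using c1 c2 l by (simp add: algebra_simps)
  finally show ?case by blast
qed




definition Umat :: "(real^'n) list \<Rightarrow> real^'n^'n" where
  "Umat qs = (\<chi> i j. \<Sum>a<length qs. qs!a$i * qs!a$j)"

lemma Umat_vec: "Umat qs *v v = (\<Sum>a<length qs. (qs!a \<bullet> v) *\<^sub>R qs!a)"
  by (simp add: vec_eq_iff Umat_def matrix_vector_mult_def inner_vec_def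
      sum_distrib_left sum_distrib_right sum.swap[of _ "{..<length qs}"] mult_ac)

lemma P_exists_aux:
  fixes A :: "real^'n^'n"
  assumes "finite T" "\<theta> \<notin> T"
  shows "\<exists>P\<in>alg A. (\<forall>v. A *v v = \<theta> *\<^sub>R v \<longrightarrow> P *v v = v) \<and>
           (\<forall>\<mu>\<in>T. \<forall>v. A *v v = \<mu> *\<^sub>R v \<longrightarrow> P *v v = 0)"
  using assms
proof (induction T rule: finite_induct)
  case empty
  show ?case by (rule bexI[of _ "mat 1"]) (auto simp: alg_gen[of A 0, simplified])
next
  case (insert \<mu> T)
  then obtain P where P: "P \<in> alg A" "\<forall>v. A *v v = \<theta> *\<^sub>R v \<longrightarrow> P *v v = v"
     "\<forall>\<mu>\<in>T. \<forall>v. A *v v = \<mu> *\<^sub>R v \<longrightarrow> P *v v = 0" by auto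
  have ne: "\<theta> - \<mu> \<noteq> 0" using insert by auto
  define P' where "P' = (1/(\<theta>-\<mu>)) *\<^sub>R (P ** A) - (\<mu>/(\<theta>-\<mu>)) *\<^sub>R P"
  have P'v: "P' *v v = (1/(\<theta>-\<mu>)) *\<^sub>R (P *v (A *v v)) - (\<mu>/(\<theta>-\<mu>)) *\<^sub>R (P *v v)" for v
    unfolding P'_def by (simp add: matrix_vector_mult_diff_rdistrib scaleR_matrix_vector_assoc[symmetric] matrix_vector_mul_assoc)
  have "P' \<in> alg A" unfolding P'_def alg_def
    using alg_mulA[OF P(1)] P(1) unfolding alg_def by (intro span_diff span_scale) auto
  moreover have "\<forall>v. A *v v = \<theta> *\<^sub>R v \<longrightarrow> P' *v v = v"
  proof (intro allI impI)
    fix v assume v: "A *v v = \<theta> *\<^sub>R v"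
    have "P' *v v = (\<theta>/(\<theta>-\<mu>) - \<mu>/(\<theta>-\<mu>)) *\<^sub>R v"
      unfolding P'v v using P(2) v by (simp add: matrix_vector_mult_scaleR algebra_simps)
    also have "\<theta>/(\<theta>-\<mu>) - \<mu>/(\<theta>-\<mu>) = 1" using ne by (simp add: diff_divide_distrib[symmetric])
    finally show "P' *v v = v" by simp
  qed
  moreover have "\<forall>\<nu>\<in>insert \<mu> T. \<forall>v. A *v v = \<nu> *\<^sub>R v \<longrightarrow> P' *v v = 0"
  proof (intro ballI allI impI)
    fix \<nu> v assume nu: "\<nu> \<in> insert \<mu> T" and v: "A *v v = \<nu> *\<^sub>R v"
    show "P' *v v = 0"
    proof (cases "\<nu> = \<mu>")
      case True thus ?thesis unfolding P'v v by (simp add: matrix_vector_mult_scaleR)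
    next
      case False
      hence "P *v v = 0" using P(3) nu v by auto
      thus ?thesis unfolding P'v v by (simp add: matrix_vector_mult_scaleR)
    qed
  qed
  ultimately show ?case by blast
qed

lemma U_in_alg:
  fixes A :: "real^'n^'n" and qs :: "(real^'n) list"
  assumes sym: "symm A"
    and on: "\<forall>a < length qs. \<forall>b < length qs. (qs ! a) \<bullet> (qs ! b) = (if a = b then 1 else 0)"
    and sp: "span (set qs) = eigenspace_of A (least_eigenvalue A)"
  shows "Umat qs \<in> alg A"
proof -
  define \<theta> where "\<theta> = least_eigenvalue A"
  define W where "W = span (set qs)"
  have W: "w \<in> W \<longleftrightarrow> A *v w = \<theta> *\<^sub>R w" for w
    using sp unfolding W_def \<theta>_def eigenspace_of_def by auto
  have fin: "finite (eigenvalues_of A - {\<theta>})" using eig_finite[OF sym] by simp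
  obtain P where P: "P \<in> alg A" "\<forall>v. A *v v = \<theta> *\<^sub>R v \<longrightarrow> P *v v = v"
     "\<forall>\<mu>\<in>eigenvalues_of A - {\<theta>}. \<forall>v. A *v v = \<mu> *\<^sub>R v \<longrightarrow> P *v v = 0"
    using P_exists_aux[OF fin, of \<theta> A] by blast
  have Psym: "symm P" by (rule alg_symm[OF sym P(1)])
  define X where "X = {y. \<forall>x\<in>W. orthogonal x y}"
  have subX: "subspace X" unfolding X_def by (rule subspace_orthogonal_to_vectors)
  have PX: "\<forall>x\<in>X. P *v x = 0"
  proof (rule ccontr)
    assume "\<not> (\<forall>x\<in>X. P *v x = 0)"
    then obtain x0 where x0: "x0 \<in> X" "P *v x0 \<noteq> 0" by blast
    define Y where "Y = (\<lambda>x. P *v x) ` X"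
    have subY: "subspace Y" unfolding Y_def
      by (rule linear_subspace_image[OF _ subX]) simp
    have XA: "A *v x \<in> X" if "x \<in> X" for x
      unfolding X_def orthogonal_def
    proof (intro CollectI ballI)
      fix w assume "w \<in> W"
      hence "w \<bullet> x = 0" "A *v w = \<theta> *\<^sub>R w" using W that unfolding X_def orthogonal_def by auto
      moreover have "w \<bullet> (A *v x) = (A *v w) \<bullet> x" using sym unfolding symm_def by blast
      ultimately show "w \<bullet> (A *v x) = 0" by simp
    qed
    have invY: "\<forall>y\<in>Y. A *v y \<in> Y"
    proof
      fix y assume "y \<in> Y"
      then obtain x where x: "x \<in> X" "y = P *v x" unfolding Y_def by blast
      have "A *v y = P *v (A *v x)" using x alg_comm[OF P(1)] by simp
      thus "A *v y \<in> Y" unfolding Y_def using XA[OF x(1)] by blast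
    qed
    have nzY: "\<exists>y\<in>Y. y \<noteq> 0" using x0 unfolding Y_def by blast
    obtain y \<mu> where y: "y \<in> Y" "y \<noteq> 0" "A *v y = \<mu> *\<^sub>R y"
      using eigvec_in_subspace[OF sym subY invY nzY] by blast
    obtain x where x: "x \<in> X" "y = P *v x" using y(1) unfolding Y_def by blast
    have yX: "y \<in> X" unfolding X_def orthogonal_def
    proof (intro CollectI ballI)
      fix w assume w: "w \<in> W"
      have "w \<bullet> y = (P *v w) \<bullet> x" using x(2) Psym unfolding symm_def by blast
      also have "P *v w = w" using P(2) W w by blast
      finally show "w \<bullet> y = 0" using x(1) w unfolding X_def orthogonal_def by simp
    qed
    show False
    proof (cases "\<mu> = \<theta>")
      case True
      hence "y \<in> W" using W y by simp
      hence "y \<bullet> y = 0" using yX unfolding X_def orthogonal_def by blast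
      thus False using y(2) by simp
    next
      case False
      have "\<mu> \<in> eigenvalues_of A" using y unfolding eigenvalues_of_def by blast
      hence Py: "P *v y = 0" using P(3) False y(3) by blast
      have "y \<bullet> y = x \<bullet> (P *v y)" using x(2) Psym unfolding symm_def by (metis inner_commute)
      hence "y \<bullet> y = 0" using Py by simp
      thus False using y(2) by simp
    qed
  qed
  have "Umat qs *v v = P *v v" for v
  proof -
    define u where "u = Umat qs *v v"
    have uW: "u \<in> W" unfolding u_def Umat_vec W_def
      by (intro span_sum span_scale span_base) simp
    have ob: "qs!b \<bullet> (v - u) = 0" if "b < length qs" for b
    proof -
      have "qs!b \<bullet> u = (\<Sum>a<length qs. (qs!a \<bullet> v) * (qs!b \<bullet> qs!a))"
        unfolding u_def Umat_vec by (simp add: inner_sum_right)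
      also have "\<dots> = (\<Sum>a<length qs. if a = b then qs!b \<bullet> v else 0)"
        using on that by (intro sum.cong) auto
      also have "\<dots> = qs!b \<bullet> v" using that by simp
      finally show ?thesis by (simp add: inner_diff_right)
    qed
    have "v - u \<in> X" unfolding X_def
    proof (intro CollectI ballI)
      fix w assume "w \<in> W"
      hence "orthogonal (v - u) w" unfolding W_def
        by (rule orthogonal_to_span) (metis ob in_set_conv_nth orthogonal_def inner_commute)
      thus "orthogonal w (v - u)" by (simp add: orthogonal_commute)
    qed
    hence "P *v (v - u) = 0" using PX by blast
    moreover have "P *v u = u" using P(2) W uW by blast
    ultimately have "P *v v = u" by (simp add: matrix_vector_mult_diff_distrib)
    thus ?thesis unfolding u_def by simp
  qed
  hence "Umat qs = P" by (simp add: matrix_eq)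
  thus ?thesis using P(1) by simp
qed




locale combi =
  fixes E :: "'n::finite \<Rightarrow> 'n \<Rightarrow> bool" and g :: "'n \<Rightarrow> 'b"
  assumes symE: "\<And>i j. E i j \<Longrightarrow> E j i"
    and irr: "\<And>i. \<not> E i i"
    and conn: "\<And>i j. E\<^sup>*\<^sup>* i j"
    and D2: "\<And>i j k. i \<noteq> j \<Longrightarrow> \<not> E i j \<Longrightarrow> E i k \<Longrightarrow> E k j \<Longrightarrow> g i = g j"
    and NE: "\<And>i j. E i j \<Longrightarrow> g i \<noteq> g j"
begin

lemma good_bip:
  assumes ua: "E u a" and gs: "\<forall>s. E u s \<longrightarrow> g s = g a"
  shows "bipartite E"
proof -
  define Inv where "Inv w \<longleftrightarrow> (g w = g u \<and> (\<forall>s. E w s \<longrightarrow> g s = g a)) \<or>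
                              (g w = g a \<and> (\<forall>s. E w s \<longrightarrow> g s = g u))" for w
  have stepI: "Inv w'" if "Inv w" "E w w'" for w w'
  proof -
    have gen: "g s = g x" if "E w s \<longrightarrow> g s = g y" "g w' = g y" "g w = g x" "E w' s" for s x y
    proof (cases "s = w")
      case True thus ?thesis using that by simp
    next
      case False
      show ?thesis
      proof (cases "E w s")
        case True
        hence "g s = g w'" using that by simp
        thus ?thesis using NE[OF that(4)] by simp
      next
        case False
        hence "g w = g s" using D2[of w s w'] \<open>s \<noteq> w\<close> \<open>E w w'\<close> that(4) by auto
        thus ?thesis using that by simp
      qed
    qed
    from that(1) show ?thesis
    proof (unfold Inv_def, elim disjE conjE)
      assume h: "g w = g u" "\<forall>s. E w s \<longrightarrow> g s = g a"
      hence h2: "g w' = g a" using \<open>E w w'\<close> by blast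
      have "\<forall>s. E w' s \<longrightarrow> g s = g u"
      proof (intro allI impI)
        fix s assume "E w' s"
        show "g s = g u" using gen[of s a u] h h2 \<open>E w' s\<close> by blast
      qed
      thus "(g w' = g u \<and> (\<forall>s. E w' s \<longrightarrow> g s = g a)) \<or>
             (g w' = g a \<and> (\<forall>s. E w' s \<longrightarrow> g s = g u))" using h2 by blast
    next
      assume h: "g w = g a" "\<forall>s. E w s \<longrightarrow> g s = g u"
      hence h2: "g w' = g u" using \<open>E w w'\<close> by blast
      have "\<forall>s. E w' s \<longrightarrow> g s = g a"
      proof (intro allI impI)
        fix s assume "E w' s"
        show "g s = g a" using gen[of s u a] h h2 \<open>E w' s\<close> by blast
      qed
      thus "(g w' = g u \<and> (\<forall>s. E w' s \<longrightarrow> g s = g a)) \<or>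
             (g w' = g a \<and> (\<forall>s. E w' s \<longrightarrow> g s = g u))" using h2 by blast
    qed
  qed
  have inv0: "Inv u" unfolding Inv_def using gs by simp
  have all: "Inv w" for w
    using conn[of u w]
  proof (induction rule: rtranclp_induct)
    case base show ?case by (rule inv0)
  next
    case (step y z) thus ?case using stepI by blast
  qed
  have ne: "g u \<noteq> g a" using NE[OF ua] .
  show ?thesis unfolding bipartite_def
  proof (rule exI[of _ "\<lambda>w. g w = g u"], intro allI impI)
    fix i j assume ij: "E i j"
    have "Inv i" using all by auto
    thus "(g i = g u) \<noteq> (g j = g u)"
    proof (unfold Inv_def, elim disjE conjE)
      assume "g i = g u" "\<forall>s. E i s \<longrightarrow> g s = g a"
      hence "g j = g a" using ij by blast
      thus ?thesis using ne \<open>g i = g u\<close> by simp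
    next
      assume "g i = g a" "\<forall>s. E i s \<longrightarrow> g s = g u"
      hence "g j = g u" using ij by blast
      thus ?thesis using ne \<open>g i = g a\<close> by simp
    qed
  qed
qed

lemma config_good:
  assumes "E u a" "E a b" "E b v" "u \<noteq> b" "\<not> E u b" "a \<noteq> v" "\<not> E a v"
    "u \<noteq> v" "\<not> E u v" "g u \<noteq> g v"
  shows "\<exists>x y. E x y \<and> (\<forall>s. E x s \<longrightarrow> g s = g y)"
proof -
  have gub: "g u = g b" using D2[of u b a, OF assms(4) assms(5) assms(1) assms(2)] .
  have gav: "g a = g v" using D2[of a v b, OF assms(6) assms(7) assms(2) assms(3)] .
  have "g c = g u" if ac: "E a c" for c
  proof (rule ccontr)
    assume c: "g c \<noteq> g u"
    hence cu: "c \<noteq> u" by auto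
    have Ecu: "E c u"
    proof (rule ccontr)
      assume "\<not> E c u" thus False using D2[of c u a, OF cu _ symE[OF ac] symE[OF assms(1)]] c by blast
    qed
    have cb: "c \<noteq> b" using c gub by auto
    have Ecb: "E c b"
    proof (rule ccontr)
      assume "\<not> E c b" hence "g c = g b" using D2[of c b a, OF cb _ symE[OF ac] assms(2)] by blast
      thus False using c gub by simp
    qed
    have cv: "c \<noteq> v" using ac assms by auto
    have Ecv: "E c v"
    proof (rule ccontr)
      assume "\<not> E c v" hence "g c = g v" using D2[of c v b, OF cv _ Ecb assms(3)] by blast
      thus False using gav NE[OF ac] by simp
    qed
    have "g u = g v" using D2[of u v c, OF assms(8) assms(9) symE[OF Ecu] Ecv] .
    thus False using assms by simp
  qed
  thus ?thesis using symE assms(1) by blast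
qed

lemma nonadj_eq:
  assumes NG: "\<not> (\<exists>x y. E x y \<and> (\<forall>s. E x s \<longrightarrow> g s = g y))"
  shows "(E ^^ n) u v \<Longrightarrow> u \<noteq> v \<Longrightarrow> \<not> E u v \<Longrightarrow> g u = g v"
proof (induction n arbitrary: u v rule: less_induct)
  case (less n)
  show ?case
  proof (cases n)
    case 0 thus ?thesis using less by simp
  next
    case (Suc n1)
    show ?thesis
    proof (cases n1)
      case 0 thus ?thesis using less Suc by (auto simp: relcompp_apply)
    next
      case (Suc n2)
      obtain p1 where p1: "E u p1" "(E ^^ n1) p1 v" using less.prems(1) \<open>n = Suc n1\<close> relpowp_Suc_D2 by metis
      show ?thesis
      proof (cases n2)
        case 0
        hence "E p1 v" using p1 Suc by (auto simp: relcompp_apply)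
        thus ?thesis using D2[of u v p1, OF less.prems(2) less.prems(3) p1(1)] by blast
      next
        case (Suc m)
        obtain p2 where p2: "E p1 p2" "(E ^^ n2) p2 v" using p1(2) \<open>n1 = Suc n2\<close> relpowp_Suc_D2 by metis
        have lt2: "n2 < n" "Suc n2 < n" using \<open>n = Suc n1\<close> \<open>n1 = Suc n2\<close> by auto
        show ?thesis
        proof (cases "p2 = u")
          case True thus ?thesis using less.IH[OF lt2(1)] p2 less.prems by blast
        next
          case pu: False
          show ?thesis
          proof (cases "E u p2")
            case True
            have "(E ^^ Suc n2) u v" using relpowp_Suc_I2[OF True p2(2)] .
            thus ?thesis using less.IH[OF lt2(2)] less.prems by blast
          next
            case nup2: False
            have gup2: "g u = g p2" using D2[of u p2 p1, OF _ nup2 p1(1) p2(1)] pu by metis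
            show ?thesis
            proof (cases "p2 = v")
              case True thus ?thesis using gup2 by simp
            next
              case p2v: False
              show ?thesis
              proof (cases "E p2 v")
                case False
                hence "g p2 = g v" using less.IH[OF lt2(1)] p2 p2v by blast
                thus ?thesis using gup2 by simp
              next
                case Ep2v: True
                show ?thesis
                proof (rule ccontr)
                  assume guv: "g u \<noteq> g v"
                  have p1v: "p1 \<noteq> v" using p1 less.prems by auto
                  have nEp1v: "\<not> E p1 v" using D2[of u v p1, OF less.prems(2) less.prems(3) p1(1)] guv by blast
                  have "u \<noteq> p2" using pu by simp
                  show False using config_good[OF p1(1) p2(1) Ep2v \<open>u \<noteq> p2\<close> nup2 p1v nEp1v less.prems(2) less.prems(3) guv] NG
                    by blast
                qed
              qed
            qed
          qed
        qed
      qed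
    qed
  qed
qed

lemma cm_or_bip: "bipartite E \<or> complete_multipartite E"
proof (cases "\<exists>x y. E x y \<and> (\<forall>s. E x s \<longrightarrow> g s = g y)")
  case True thus ?thesis using good_bip by blast
next
  case NG: False
  have key: "g u = g v" if "\<not> E u v" for u v
  proof (cases "u = v")
    case True thus ?thesis by simp
  next
    case False
    obtain n where "(E ^^ n) u v" using rtranclp_imp_relpowp[OF conn[of u v]] by blast
    thus ?thesis using nonadj_eq[OF NG] False that by blast
  qed
  define p where "p i = (SOME j. g j = g i)" for i
  have gp: "g (p i) = g i" for i unfolding p_def by (rule someI_ex) blast
  have "p i = p j \<longleftrightarrow> g i = g j" for i j
  proof
    assume "p i = p j" thus "g i = g j" using gp by metis
  next
    assume "g i = g j" thus "p i = p j" unfolding p_def by simp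
  qed
  hence "E i j \<longleftrightarrow> p i \<noteq> p j" for i j using key NE by blast
  thus ?thesis unfolding complete_multipartite_def by blast
qed

end




lemma mv_axis: "(M *v axis j (1::real)) $ i = M$i$j"
  by (simp add: matrix_vector_mult_def axis_def if_distrib cong: if_cong)

theorem lemma4p10:
  fixes E :: "'n::finite \<Rightarrow> 'n \<Rightarrow> bool" and qs :: "(real^'n) list"
  assumes "simple_graph E"
    and "connected_graph E"
    and "two_walk_regular E"
    and "\<not> bipartite E"
    and "\<not> complete_multipartite E"
    and "least_eig_onb E qs"
  shows "locally_injective E (canonical_coloring qs)"
proof -
  define A where "A = adj_matrix E"
  have sym: "symm A" unfolding A_def by (rule adj_symm[OF assms(1)])
  have symE: "E i j \<Longrightarrow> E j i" for i j using assms(1) unfolding simple_graph_def by blast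
  have irr: "\<not> E i i" for i using assms(1) unfolding simple_graph_def by blast
  have conn: "E\<^sup>*\<^sup>* i j" for i j using assms(2) unfolding connected_graph_def by blast
  have on: "\<forall>a < length qs. \<forall>b < length qs. (qs ! a) \<bullet> (qs ! b) = (if a = b then 1 else 0)"
    and sp: "span (set qs) = eigenspace_of A (least_eigenvalue A)"
    using assms(6) unfolding least_eig_onb_def A_def by auto
  define \<theta> where "\<theta> = least_eigenvalue A"
  define U where "U = Umat qs"
  have Uin: "U \<in> alg A" unfolding U_def by (rule U_in_alg[OF sym on sp])
  have owr: "one_walk_regular E" and twr: "\<forall>l. \<exists>c. hadamard (matpow A l) (dist2_matrix E) = c *\<^sub>R dist2_matrix E"
    using assms(3) unfolding two_walk_regular_def A_def by auto
  have w1: "\<forall>l. \<exists>c. hadamard (matpow A l) (mat 1) = c *\<^sub>R mat 1"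
   and wA: "\<forall>l. \<exists>c. hadamard (matpow A l) A = c *\<^sub>R A"
    using owr unfolding one_walk_regular_def A_def by blast+
  obtain \<alpha> where hal: "hadamard U (mat 1) = \<alpha> *\<^sub>R mat 1" using alg_hadamard[OF w1 Uin] by blast
  obtain \<beta> where hbe: "hadamard U A = \<beta> *\<^sub>R A" using alg_hadamard[OF wA Uin] by blast
  obtain \<gamma> where hga: "hadamard U (dist2_matrix E) = \<gamma> *\<^sub>R dist2_matrix E" using alg_hadamard[OF twr Uin] by blast
  have Uij: "U$i$j = (\<Sum>a<length qs. qs!a$i * qs!a$j)" for i j unfolding U_def Umat_def by simp
  have diag: "U$i$i = \<alpha>" for i
    using arg_cong[OF hal, of "\<lambda>M. M$i$i"] by (simp add: hadamard_def mat_def)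
  have edge: "U$i$j = \<beta>" if "E i j" for i j
    using arg_cong[OF hbe, of "\<lambda>M. M$i$j"] that by (simp add: hadamard_def A_def adj_matrix_def)
  have d2: "U$i$j = \<gamma>" if "i \<noteq> j" "\<not> E i j" "E i k" "E k j" for i j k
  proof -
    have "dist2_matrix E $ i $ j = 1" using that unfolding dist2_matrix_def by auto
    moreover have "U$i$j * dist2_matrix E $ i $ j = \<gamma> * dist2_matrix E $ i $ j"
      using arg_cong[OF hga, of "\<lambda>M. M$i$j"] by (simp add: hadamard_def)
    ultimately show ?thesis by simp
  qed
  define g where "g i = map (\<lambda>q. q$i) qs" for i
  have geq: "g i = g j \<longleftrightarrow> (\<forall>a<length qs. qs!a$i = qs!a$j)" for i j
    unfolding g_def by (simp add: list_eq_iff_nth_eq)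
  have UR: "U$i$j = \<alpha>" if "g i = g j" for i j
  proof -
    have "U$i$j = U$i$i" unfolding Uij using that geq by (intro sum.cong) auto
    thus ?thesis using diag by simp
  qed
  have RU: "g i = g j" if "U$i$j = \<alpha>" for i j
  proof -
    have "(\<Sum>a<length qs. (qs!a$i - qs!a$j)^2) =
        (\<Sum>a<length qs. qs!a$i*qs!a$i - 2*(qs!a$i*qs!a$j) + qs!a$j*qs!a$j)"
      by (intro sum.cong) (simp_all add: power2_eq_square algebra_simps)
    also have "\<dots> = U$i$i - 2 * U$i$j + U$j$j"
      unfolding Uij by (simp only: sum.distrib sum_subtractf sum_distrib_left)
    also have "\<dots> = 0" using that diag by simp
    finally have "\<forall>a\<in>{..<length qs}. (qs!a$i - qs!a$j)^2 = 0"
      by (subst sum_nonneg_eq_0_iff[symmetric]) auto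
    thus ?thesis using geq by auto
  qed
  have thmin: "least_eigenvalue A \<in> eigenvalues_of A" and ray: "\<forall>z. \<theta> * (z \<bullet> z) \<le> z \<bullet> (A *v z)"
    using least_eig[OF sym] unfolding \<theta>_def by auto
  have qsne: "qs \<noteq> []"
  proof
    assume "qs = []"
    hence "eigenspace_of A \<theta> = {0}" using sp \<theta>_def by simp
    moreover obtain v where "v \<noteq> 0" "A *v v = \<theta> *\<^sub>R v" using thmin unfolding eigenvalues_of_def \<theta>_def by blast
    ultimately show False unfolding eigenspace_of_def by blast
  qed
  have allR: False if all: "\<forall>i j. g i = g j" and ed: "E i0 k0" for i0 k0
  proof -
    have ik: "i0 \<noteq> k0" using ed irr by auto
    define z where "z = axis i0 (1::real) - axis k0 1"
    have zz: "z \<bullet> z = 2" using ik unfolding z_def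
      by (simp add: inner_diff_left inner_diff_right inner_axis_axis)
    have Aik: "A$i0$k0 = 1" "A$k0$i0 = 1" "A$i0$i0 = 0" "A$k0$k0 = 0"
      using ed symE[OF ed] irr unfolding A_def adj_matrix_def by auto
    have zAz: "z \<bullet> (A *v z) = -2"
      unfolding z_def using Aik
      by (simp add: inner_diff_left matrix_vector_mult_diff_distrib inner_axis' mv_axis)
    have thn: "\<theta> \<le> -1" using ray[rule_format, of z] zz zAz by simp
    define q where "q = qs!0"
    have q0: "0 < length qs" using qsne by simp
    have qq: "q \<bullet> q = 1" using on q0 unfolding q_def by auto
    have "q \<in> span (set qs)" unfolding q_def using q0 by (intro span_base) simp
    hence Aq: "A *v q = \<theta> *\<^sub>R q" using sp unfolding eigenspace_of_def \<theta>_def by simp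
    have const: "q$j = q$i0" for j using all geq q0 unfolding q_def by blast
    have "q$i0 \<noteq> 0"
    proof
      assume "q$i0 = 0"
      hence "q = 0" using const by (metis vec_eq_iff zero_index)
      thus False using qq by simp
    qed
    have "(A *v q)$i0 = (\<Sum>j\<in>UNIV. A$i0$j * q$j)"
      by (simp add: matrix_vector_mult_def)
    also have "\<dots> = (\<Sum>j\<in>UNIV. A$i0$j * q$i0)"
      by (intro sum.cong refl) (metis const)
    also have "\<dots> = (\<Sum>j\<in>UNIV. A$i0$j) * q$i0" by (simp add: sum_distrib_right)
    finally have "(A *v q)$i0 = (\<Sum>j\<in>UNIV. A$i0$j) * q$i0" .
    hence "\<theta> * q$i0 = (\<Sum>j\<in>UNIV. A$i0$j) * q$i0" using Aq by simp
    hence "\<theta> = (\<Sum>j\<in>UNIV. A$i0$j)" using \<open>q$i0 \<noteq> 0\<close> by simp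
    moreover have "(\<Sum>j\<in>UNIV. A$i0$j) \<ge> 0" unfolding A_def adj_matrix_def by (intro sum_nonneg) auto
    ultimately show False using thn by simp
  qed
  have NE: "g i \<noteq> g j" if "E i j" for i j
  proof
    assume "g i = g j"
    hence ab: "\<alpha> = \<beta>" using UR edge[OF that] by simp
    have ee: "g u = g v" if "E u v" for u v using RU edge[OF that] ab by simp
    have "g i = g v" for v using conn[of i v]
      by (induction rule: rtranclp_induct) (use ee in auto)
    hence "\<forall>u v. g u = g v" by metis
    thus False using allR that by blast
  qed
  show ?thesis unfolding locally_injective_def
  proof (intro allI impI)
    fix i j assume ij: "i \<noteq> j \<and> (\<exists>k. E i k \<and> E j k)"
    then obtain k where k: "E i k" "E j k" by blast
    show "canonical_coloring qs i \<noteq> canonical_coloring qs j"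
    proof
      assume ceq: "canonical_coloring qs i = canonical_coloring qs j"
      define s where "s = sqrt (real CARD('n) / real (length qs))"
      have "s > 0" unfolding s_def using qsne by simp
      have "canonical_coloring qs x = map ((*) s) (g x)" for x
        unfolding canonical_coloring_def g_def s_def by simp
      hence "map ((*) s) (g i) = map ((*) s) (g j)" using ceq by simp
      moreover have "inj ((*) s)" using \<open>s > 0\<close> by (auto intro: injI)
      ultimately have gij: "g i = g j" by (simp add: inj_map_eq_map)
      show False
      proof (cases "E i j")
        case True thus False using NE gij by blast
      next
        case False
        have ag: "\<alpha> = \<gamma>" using UR[OF gij] d2[OF _ False k(1) symE[OF k(2)]] ij by simp
        have D2: "g u = g v" if "u \<noteq> v" "\<not> E u v" "E u w" "E w v" for u v w
          using RU d2[OF that] ag by simp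
        interpret combi E g
          apply unfold_locales
              apply (erule symE)
             apply (rule irr)
            apply (rule conn)
           apply (erule (3) D2)
          apply (erule NE)
          done
        show False using cm_or_bip assms(4,5) by blast
      qed
    qed
  qed
qed


end
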